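(* Let $E$ be a finite-dimensional real vector space, $E_0\subseteq E$ a real subspace, $p:E^*\to E_0^*$ the restriction map, and $\mu$ a tempered positive Borel measure on $E^*$ such that $\mu_0:=p_*\mu$ is also tempered. Then $\operatorname{supp}(\operatorname{Im}\tilde\mu_0)\subseteq\operatorname{supp}(\operatorname{Im}\tilde\mu)$, where $E_0$ is regarded as a subset of $E$.
   Context: For a tempered measure $\nu$ on the dual $F^*$ of a finite-dimensional real vector space $F$, $\tilde\nu$ is the tempered distribution on $F$ given by $\tilde\nu(\phi)=\int_{F^*}\widetilde{\overline\phi}\,d\nu$, $\tilde\psi(\lambda)=\int_Fe^{i\lambda(x)}\psi(x)dx$; $\operatorname{Im}\tilde\nu$ is the distribution with $(\operatorname{Im}\tilde\nu)(\phi)=\operatorname{Im}(\tilde\nu(\phi))$ for real-valued test functions $\phi$. *)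

theory Defs
  imports "HOL-Analysis.Analysis"
begin

text \<open>A finite-dimensional real vector space F is a type of class
euclidean_space; its dual F* is identified with F itself via the inner product
(the functional lambda acts by x maps to lambda \<bullet> x). Lebesgue measure lborel
plays the role of dx (any Haar measure; supports do not depend on the normalisation).\<close>

fun C_k :: "nat \<Rightarrow> ('a::euclidean_space \<Rightarrow> real) \<Rightarrow> bool" where
  "C_k 0 f = continuous_on UNIV f"
| "C_k (Suc k) f = (f differentiable_on UNIV \<and>
      (\<forall>v. C_k k (\<lambda>x. frechet_derivative f (at x) v)))"

definition smooth :: "('a::euclidean_space \<Rightarrow> real) \<Rightarrow> bool" where
  "smooth f \<longleftrightarrow> (\<forall>k. C_k k f)"

definition tsupport :: "('a::euclidean_space \<Rightarrow> real) \<Rightarrow> 'a set" where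
  "tsupport f = closure {x. f x \<noteq> 0}"

definition test_function :: "('a::euclidean_space \<Rightarrow> real) \<Rightarrow> bool" where
  "test_function f \<longleftrightarrow> smooth f \<and> compact (tsupport f)"

definition dist_support :: "(('a::euclidean_space \<Rightarrow> real) \<Rightarrow> real) \<Rightarrow> 'a set" where
  "dist_support T = UNIV - \<Union>{U. open U \<and>
      (\<forall>\<phi>. test_function \<phi> \<and> tsupport \<phi> \<subseteq> U \<longrightarrow> T \<phi> = 0)}"

definition tempered_measure :: "'a::euclidean_space measure \<Rightarrow> bool" where
  "tempered_measure M \<longleftrightarrow> sets M = sets borel \<and>
     (\<exists>N::nat. (\<integral>\<^sup>+ \<xi>. ennreal (1 / (1 + norm \<xi>) ^ N) \<partial>M) < \<infinity>)"

definition fourier :: "('a::euclidean_space \<Rightarrow> complex) \<Rightarrow> 'a \<Rightarrow> complex" where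
  "fourier \<psi> \<xi> = (LINT x|lborel. exp (\<i> * complex_of_real (\<xi> \<bullet> x)) * \<psi> x)"

definition meas_tilde :: "'a::euclidean_space measure \<Rightarrow> ('a \<Rightarrow> complex) \<Rightarrow> complex" where
  "meas_tilde \<nu> \<phi> = (LINT \<xi>|\<nu>. fourier (\<lambda>x. cnj (\<phi> x)) \<xi>)"

definition Im_tilde :: "'a::euclidean_space measure \<Rightarrow> ('a \<Rightarrow> real) \<Rightarrow> real" where
  "Im_tilde \<nu> \<phi> = Im (meas_tilde \<nu> (\<lambda>x. complex_of_real (\<phi> x)))"

end

theory Submission
  imports Defs "HOL-Computational_Algebra.Polynomial"
begin


lemma fd_eq: "(f has_derivative f') (at x) \<Longrightarrow> frechet_derivative f (at x) v = f' v"
  using frechet_derivative_at by metis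

lemma C_k_cont: "C_k k f \<Longrightarrow> continuous_on UNIV f"
  by (cases k) (auto intro: differentiable_imp_continuous_on)

lemma C_k_mono: "C_k (Suc k) f \<Longrightarrow> C_k k f"
proof (induction k arbitrary: f)
  case 0
  then show ?case by (auto intro: differentiable_imp_continuous_on)
next
  case (Suc k)
  then show ?case by auto
qed

lemma smooth_iff: "smooth f \<longleftrightarrow> f differentiable_on UNIV \<and>
   (\<forall>v. smooth (\<lambda>x. frechet_derivative f (at x) v))"
proof
  assume "smooth f"
  then have "C_k (Suc k) f" for k unfolding smooth_def by blast
  then show "f differentiable_on UNIV \<and> (\<forall>v. smooth (\<lambda>x. frechet_derivative f (at x) v))"
    unfolding smooth_def by auto
next
  assume A: "f differentiable_on UNIV \<and> (\<forall>v. smooth (\<lambda>x. frechet_derivative f (at x) v))"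
  show "smooth f" unfolding smooth_def
  proof
    fix k show "C_k k f"
      using A by (cases k) (auto simp: smooth_def intro: differentiable_imp_continuous_on)
  qed
qed

lemma smooth_coinduct:
  assumes "P f"
    and step: "\<And>f. P f \<Longrightarrow> f differentiable_on UNIV \<and> (\<forall>v. P (\<lambda>x. frechet_derivative f (at x) v))"
  shows "smooth f"
proof -
  have "\<forall>f. P f \<longrightarrow> C_k k f" for k
  proof (induction k)
    case 0
    then show ?case using step by (auto intro: differentiable_imp_continuous_on)
  next
    case (Suc k)
    then show ?case using step by auto
  qed
  then show ?thesis using assms(1) unfolding smooth_def by blast
qed

lemma smooth_cont: "smooth f \<Longrightarrow> continuous_on UNIV f"
  unfolding smooth_def using C_k_cont by blast

lemma smooth_deriv: "smooth f \<Longrightarrow> smooth (\<lambda>x. frechet_derivative f (at x) v)"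
  using smooth_iff by blast

lemma smooth_diff: "smooth f \<Longrightarrow> f differentiable_on UNIV"
  using smooth_iff by blast

lemma C_k_const: "C_k k (\<lambda>x. c)"
proof (induction k arbitrary: c)
  case 0 then show ?case by simp
next
  case (Suc k) then show ?case by simp
qed

lemma C_k_add: "C_k k f \<Longrightarrow> C_k k g \<Longrightarrow> C_k k (\<lambda>x. f x + g x)"
proof (induction k arbitrary: f g)
  case 0 then show ?case by (auto intro: continuous_intros)
next
  case (Suc k)
  have df: "f differentiable_on UNIV" and dg: "g differentiable_on UNIV" using Suc.prems by auto
  have eq: "(\<lambda>x. frechet_derivative (\<lambda>x. f x + g x) (at x) v) =
     (\<lambda>x. frechet_derivative f (at x) v + frechet_derivative g (at x) v)" for v
  proof
    fix x
    have "(f has_derivative frechet_derivative f (at x)) (at x)"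
      "(g has_derivative frechet_derivative g (at x)) (at x)"
      using df dg by (auto simp: differentiable_on_def frechet_derivative_works[symmetric])
    from has_derivative_add[OF this] show "frechet_derivative (\<lambda>x. f x + g x) (at x) v =
     frechet_derivative f (at x) v + frechet_derivative g (at x) v" by (rule fd_eq)
  qed
  show ?case using Suc df dg by (auto simp: eq intro: differentiable_on_add)
qed

lemma C_k_mult: "C_k k f \<Longrightarrow> C_k k g \<Longrightarrow> C_k k (\<lambda>x. f x * g x)"
proof (induction k arbitrary: f g)
  case 0 then show ?case by (auto intro: continuous_intros)
next
  case (Suc k)
  have df: "f differentiable_on UNIV" and dg: "g differentiable_on UNIV" using Suc.prems by auto
  have eq: "(\<lambda>x. frechet_derivative (\<lambda>x. f x * g x) (at x) v) =
     (\<lambda>x. f x * frechet_derivative g (at x) v + frechet_derivative f (at x) v * g x)" for v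
  proof
    fix x
    have "(f has_derivative frechet_derivative f (at x)) (at x)"
      "(g has_derivative frechet_derivative g (at x)) (at x)"
      using df dg by (auto simp: differentiable_on_def frechet_derivative_works[symmetric])
    from has_derivative_mult[OF this] show "frechet_derivative (\<lambda>x. f x * g x) (at x) v =
     f x * frechet_derivative g (at x) v + frechet_derivative f (at x) v * g x" by (rule fd_eq)
  qed
  have "C_k k f" "C_k k g" using Suc.prems C_k_mono by blast+
  moreover have "C_k k (\<lambda>x. frechet_derivative f (at x) v)" "C_k k (\<lambda>x. frechet_derivative g (at x) v)" for v
    using Suc.prems by auto
  ultimately show ?case using Suc df dg
    by (auto simp: eq intro!: C_k_add differentiable_on_mult)
qed

lemma C_k_comp: "C_k k (h::real \<Rightarrow> real) \<Longrightarrow> C_k k g \<Longrightarrow> C_k k (\<lambda>x. h (g x))"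
proof (induction k arbitrary: h g)
  case 0 then show ?case by (auto intro: continuous_on_compose2)
next
  case (Suc k)
  have dh: "h differentiable_on UNIV" and dg: "g differentiable_on UNIV" using Suc.prems by auto
  have eq: "(\<lambda>x. frechet_derivative (\<lambda>x. h (g x)) (at x) v) =
     (\<lambda>x. frechet_derivative g (at x) v * (\<lambda>t. frechet_derivative h (at t) 1) (g x))" for v
  proof
    fix x
    have "(h has_derivative frechet_derivative h (at (g x))) (at (g x))"
      "(g has_derivative frechet_derivative g (at x)) (at x)"
      using dh dg by (auto simp: differentiable_on_def frechet_derivative_works[symmetric])
    from diff_chain_at[OF this(2) this(1)]
    have "frechet_derivative (\<lambda>x. h (g x)) (at x) v = frechet_derivative h (at (g x)) (frechet_derivative g (at x) v)"
      by (auto simp: o_def dest: fd_eq)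
    also have "\<dots> = frechet_derivative g (at x) v * frechet_derivative h (at (g x)) 1"
    proof -
      have "linear (frechet_derivative h (at (g x)))"
        using dh by (auto simp: differentiable_on_def intro: linear_frechet_derivative)
      then show ?thesis using linear_scale[of "frechet_derivative h (at (g x))" "frechet_derivative g (at x) v" 1]
        by simp
    qed
    finally show "frechet_derivative (\<lambda>x. h (g x)) (at x) v =
       frechet_derivative g (at x) v * (\<lambda>t. frechet_derivative h (at t) 1) (g x)" by simp
  qed
  have "C_k k g" using Suc.prems C_k_mono by blast
  moreover have "C_k k (\<lambda>t. frechet_derivative h (at t) 1)" using Suc.prems by auto
  moreover have "C_k k (\<lambda>x. frechet_derivative g (at x) v)" for v
    using Suc.prems by auto
  ultimately show ?case using Suc dh dg
    by (auto simp: eq intro!: C_k_mult differentiable_on_compose[of g UNIV h] intro: differentiable_on_subset)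
qed

lemma smooth_const: "smooth (\<lambda>x. c)"
  unfolding smooth_def using C_k_const by blast
lemma smooth_add: "smooth f \<Longrightarrow> smooth g \<Longrightarrow> smooth (\<lambda>x. f x + g x)"
  unfolding smooth_def using C_k_add by blast
lemma smooth_mult: "smooth f \<Longrightarrow> smooth g \<Longrightarrow> smooth (\<lambda>x. f x * g x)"
  unfolding smooth_def using C_k_mult by blast
lemma smooth_comp: "smooth (h::real\<Rightarrow>real) \<Longrightarrow> smooth g \<Longrightarrow> smooth (\<lambda>x. h (g x))"
  unfolding smooth_def using C_k_comp by blast



lemma smooth_sum: "finite S \<Longrightarrow> (\<And>i. i \<in> S \<Longrightarrow> smooth (f i)) \<Longrightarrow> smooth (\<lambda>x. \<Sum>i\<in>S. f i x)"
proof (induction S rule: finite_induct)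
  case empty then show ?case by (simp add: smooth_const)
next
  case (insert a S) then show ?case by (simp add: smooth_add)
qed

lemma smooth_inner_left: "smooth (\<lambda>z::'a::euclidean_space. w \<bullet> z)"
proof (rule smooth_coinduct[where P="\<lambda>f. (\<exists>w. f = (\<lambda>z::'a. w \<bullet> z)) \<or> (\<exists>c. f = (\<lambda>z. c))"])
  fix f :: "'a \<Rightarrow> real"
  assume "(\<exists>w. f = (\<lambda>z::'a. w \<bullet> z)) \<or> (\<exists>c. f = (\<lambda>z. c))"
  then show "f differentiable_on UNIV \<and> (\<forall>v. (\<exists>w. (\<lambda>x. frechet_derivative f (at x) v) = (\<lambda>z::'a. w \<bullet> z)) \<or>
        (\<exists>c. (\<lambda>x. frechet_derivative f (at x) v) = (\<lambda>z. c)))"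
  proof
    assume "\<exists>w. f = (\<lambda>z::'a. w \<bullet> z)"
    then obtain w where f: "f = (\<lambda>z::'a. w \<bullet> z)" by blast
    have d: "(f has_derivative (\<lambda>v. w \<bullet> v)) (at x)" for x
      unfolding f by (rule bounded_linear_imp_has_derivative) (rule bounded_linear_inner_right)
    then have "frechet_derivative f (at x) v = w \<bullet> v" for x v by (rule fd_eq)
    then show ?thesis using d by (auto simp: differentiable_on_def differentiable_def)
  next
    assume "\<exists>c. f = (\<lambda>z. c)"
    then show ?thesis by auto
  qed
qed auto

lemma smooth_inner_self: "smooth (\<lambda>z::'a::euclidean_space. z \<bullet> z)"
proof -
  have "smooth (\<lambda>z::'a. \<Sum>i\<in>Basis. (i \<bullet> z) * (i \<bullet> z))"
    by (intro smooth_sum smooth_mult smooth_inner_left) auto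
  moreover have "(\<lambda>z::'a. \<Sum>i\<in>Basis. (i \<bullet> z) * (i \<bullet> z)) = (\<lambda>z. z \<bullet> z)"
  proof
    fix z :: 'a
    have "z \<bullet> z = (\<Sum>b\<in>Basis. (z \<bullet> b) * (z \<bullet> b))" by (rule euclidean_inner)
    then show "(\<Sum>i\<in>Basis. (i \<bullet> z) * (i \<bullet> z)) = z \<bullet> z" by (simp add: inner_commute)
  qed
  ultimately show ?thesis by simp
qed

definition hf :: "real poly \<Rightarrow> real \<Rightarrow> real" where
  "hf p t = (if t > 0 then poly p (1/t) * exp (-(1/t)) else 0)"

lemma poly_exp_lim: "((\<lambda>s. poly q s * exp (-s)) \<longlongrightarrow> (0::real)) at_top"
proof -
  have "((\<lambda>s. \<Sum>i\<le>degree q. coeff q i * (s ^ i / exp s)) \<longlongrightarrow> (\<Sum>i\<le>degree q. coeff q i * 0)) at_top"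
    by (intro tendsto_sum tendsto_mult tendsto_const tendsto_power_div_exp_0)
  moreover have "(\<lambda>s. \<Sum>i\<le>degree q. coeff q i * (s ^ i / exp s)) = (\<lambda>s. poly q s * exp (-s))"
    by (auto simp: poly_altdef sum_divide_distrib exp_minus field_simps)
  ultimately show ?thesis by simp
qed

lemma poly_exp_lim0: "((\<lambda>t. poly q (1/t) * exp (-(1/t))) \<longlongrightarrow> (0::real)) (at_right 0)"
proof -
  have "filterlim (\<lambda>t::real. 1/t) at_top (at_right 0)"
    using filterlim_inverse_at_top_right by (simp add: inverse_eq_divide)
  from filterlim_compose[OF poly_exp_lim this] show ?thesis by (simp add: o_def)
qed

lemma hf_deriv: "(hf p has_real_derivative hf ([:0,0,1:] * (p - pderiv p)) t) (at t)"
proof (cases "t = 0")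
  case True
  have "((\<lambda>y. (hf p y - hf p 0) / (y - 0)) \<longlongrightarrow> 0) (at (0::real))"
  proof (rule filterlim_split_at)
    have "eventually (\<lambda>y. 0 = (hf p y - hf p 0) / (y - 0)) (at_left (0::real))"
      unfolding eventually_at_left_field by (auto intro!: exI[of _ "-1"] simp: hf_def)
    then show "((\<lambda>y. (hf p y - hf p 0) / (y - 0)) \<longlongrightarrow> 0) (at_left 0)"
      by (rule Lim_transform_eventually[rotated]) simp
  next
    have "eventually (\<lambda>y. poly (pCons 0 p) (1/y) * exp (-(1/y)) = (hf p y - hf p 0) / (y - 0)) (at_right (0::real))"
      unfolding eventually_at_right_field by (auto intro!: exI[of _ "1"] simp: hf_def)
    then show "((\<lambda>y. (hf p y - hf p 0) / (y - 0)) \<longlongrightarrow> 0) (at_right 0)"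
      by (rule Lim_transform_eventually[OF poly_exp_lim0])
  qed
  then show ?thesis using True by (simp add: has_field_derivative_iff hf_def)
next
  case False
  then show ?thesis
  proof (cases "t > 0")
    case True
    have i: "((\<lambda>t. inverse t) has_real_derivative (- (inverse t ^ Suc (Suc 0)))) (at t)"
      using True by (intro DERIV_inverse) simp
    have a: "((\<lambda>t. poly p (inverse t)) has_real_derivative poly (pderiv p) (inverse t) * (- (inverse t ^ Suc (Suc 0)))) (at t)"
      by (rule DERIV_chain2[OF poly_DERIV i])
    have b: "((\<lambda>t. exp (- inverse t)) has_real_derivative exp (- inverse t) * (- (- (inverse t ^ Suc (Suc 0))))) (at t)"
      by (rule DERIV_chain2[OF DERIV_exp DERIV_minus[OF i]])
    have "((\<lambda>t. poly p (inverse t) * exp (- inverse t)) has_real_derivative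
       poly p (inverse t) * (exp (- inverse t) * (- (- (inverse t ^ Suc (Suc 0))))) + 
       poly (pderiv p) (inverse t) * (- (inverse t ^ Suc (Suc 0))) * exp (- inverse t)) (at t)"
      by (rule DERIV_mult'[OF a b])
    moreover have "poly p (inverse t) * (exp (- inverse t) * (- (- (inverse t ^ Suc (Suc 0))))) + 
       poly (pderiv p) (inverse t) * (- (inverse t ^ Suc (Suc 0))) * exp (- inverse t)
        = hf ([:0,0,1:] * (p - pderiv p)) t"
      using True by (simp add: hf_def poly_diff algebra_simps power2_eq_square inverse_eq_divide)
    ultimately have "((\<lambda>t. poly p (inverse t) * exp (- inverse t)) has_real_derivative hf ([:0,0,1:] * (p - pderiv p)) t) (at t)"
      by simp
    then show ?thesis
      by (rule has_field_derivative_transform_within_open[where S="{0<..}"]) (use True in \<open>auto simp: hf_def inverse_eq_divide\<close>)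
  next
    case False
    with \<open>t \<noteq> 0\<close> have "t < 0" by simp
    have "((\<lambda>t. 0) has_real_derivative 0) (at t)" by simp
    then have "(hf p has_real_derivative 0) (at t)"
      by (rule has_field_derivative_transform_within_open[where S="{..<0}"]) (use \<open>t<0\<close> in \<open>auto simp: hf_def\<close>)
    then show ?thesis using \<open>t<0\<close> by (simp add: hf_def)
  qed
qed

lemma hf_smult: "v * hf q t = hf (smult v q) t"
  by (simp add: hf_def)

lemma smooth_hf: "smooth (hf p)"
proof (rule smooth_coinduct[where P="\<lambda>f. \<exists>p. f = hf p"])
  fix f :: "real \<Rightarrow> real" assume "\<exists>p. f = hf p"
  then obtain p where f: "f = hf p" by blast
  let ?q = "[:0,0,1:] * (p - pderiv p)"
  have d: "(f has_derivative (\<lambda>v. hf ?q t * v)) (at t)" for t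
    using hf_deriv[of p t] unfolding f has_field_derivative_def by simp
  then have "frechet_derivative f (at t) v = hf (smult v ?q) t" for t v
    using fd_eq hf_smult by (metis mult.commute)
  then show "f differentiable_on UNIV \<and> (\<forall>v. \<exists>p. (\<lambda>x. frechet_derivative f (at x) v) = hf p)"
    using d by (auto simp: differentiable_on_def differentiable_def)
qed auto



definition beta :: "real \<Rightarrow> 'a::euclidean_space \<Rightarrow> real" where
  "beta r z = hf 1 (r^2 - z \<bullet> z)"

lemma smooth_beta: "smooth (beta r)"
proof -
  have "smooth (\<lambda>z::'a. r^2 + (-1) * (z \<bullet> z))"
    by (intro smooth_add smooth_mult smooth_const smooth_inner_self)
  from smooth_comp[OF smooth_hf this, of 1] show ?thesis
    unfolding beta_def by simp
qed

lemma beta_nonneg: "beta r z \<ge> 0"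
  by (simp add: beta_def hf_def)

lemma beta_zero: "0 \<le> r \<Longrightarrow> r \<le> norm z \<Longrightarrow> beta r z = 0"
proof -
  assume "0 \<le> r" "r \<le> norm z"
  then have "r^2 \<le> (norm z)^2" by (simp add: power_mono)
  then show ?thesis by (simp add: beta_def hf_def power2_norm_eq_inner)
qed

lemma beta_lower: "0 < r \<Longrightarrow> norm z < r/2 \<Longrightarrow> exp (- (1 / (3/4 * r^2))) \<le> beta r z"
proof -
  assume r: "0 < r" and z: "norm z < r/2"
  have "(norm z)^2 \<le> (r/2)^2" using z by (simp add: power_mono)
  then have zz: "z \<bullet> z \<le> r^2/4" by (simp add: power2_norm_eq_inner power_divide)
  then have pos: "3/4 * r^2 \<le> r^2 - z \<bullet> z" by simp
  have p3: "0 < 3/4 * r^2" using r by simp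
  have pos': "0 < r^2 - z \<bullet> z" using pos p3 by linarith
  have "1 / (r^2 - z \<bullet> z) \<le> 1 / (3/4 * r^2)"
    using pos p3 pos' by (intro divide_left_mono) (auto intro!: mult_pos_pos)
  then have "exp (-(1/(3/4*r^2))) \<le> exp (-(1/(r^2 - z \<bullet> z)))" by simp
  then show ?thesis using pos' by (simp add: beta_def hf_def)
qed

lemma beta_cont: "continuous_on UNIV (beta r)"
  using smooth_cont smooth_beta by blast

lemma beta_integrable: "0 \<le> r \<Longrightarrow> integrable lborel (beta r :: 'a::euclidean_space \<Rightarrow> real)"
proof -
  assume r: "0 \<le> r"
  have "integrable lborel (\<lambda>x::'a. indicator (cball 0 r) x *\<^sub>R beta r x)"
    by (rule borel_integrable_compact) (auto intro: continuous_on_subset[OF beta_cont])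
  moreover have "(\<lambda>x::'a. indicator (cball 0 r) x *\<^sub>R beta r x) = beta r"
  proof
    fix x :: 'a
    show "indicator (cball 0 r) x *\<^sub>R beta r x = beta r x"
      by (cases "norm x \<le> r") (auto intro!: beta_zero[OF r])
  qed
  ultimately show ?thesis by simp
qed

lemma beta_integral_pos: "0 < r \<Longrightarrow> 0 < (LINT z|lborel. beta r (z::'a::euclidean_space))"
proof -
  assume r: "0 < r"
  define m where "m = exp (- (1 / (3/4 * r^2)))"
  have m: "0 < m" by (simp add: m_def)
  have "(LINT z|lborel. m * indicator (ball (0::'a) (r/2)) z) = m * measure lborel (ball (0::'a) (r/2))"
    by (simp add: integral_indicator)
  also have "\<dots> > 0" using m r by simp
  also have "(LINT z|lborel. m * indicator (ball (0::'a) (r/2)) z) \<le> (LINT z|lborel. beta r (z::'a))"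
  proof (rule integral_mono)
    show "integrable lborel (\<lambda>z::'a. m * indicator (ball 0 (r/2)) z)"
      by (intro integrable_mult_right integrable_real_indicator) (use emeasure_bounded_finite[of "ball (0::'a) (r/2)"] in auto)
    show "integrable lborel (beta r :: 'a \<Rightarrow> real)" using r by (intro beta_integrable) simp
    fix z :: 'a
    show "m * indicator (ball 0 (r/2)) z \<le> beta r z"
      using beta_lower[OF r, of z] beta_nonneg[of r z] by (auto simp: m_def indicator_def)
  qed
  finally show ?thesis .
qed

definition rho :: "real \<Rightarrow> 'a::euclidean_space \<Rightarrow> real" where
  "rho r z = beta r z / (LINT z|lborel. beta r (z::'a))"

lemma smooth_rho: "smooth (rho r)"
proof -
  have "smooth (\<lambda>z. beta r z * (1 / (LINT z|lborel. beta r (z::'a))))"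
    by (intro smooth_mult smooth_beta smooth_const)
  then show ?thesis unfolding rho_def by simp
qed

lemma rho_nonneg: "0 < r \<Longrightarrow> rho r z \<ge> 0"
  using beta_integral_pos[of r, where 'a='a] beta_nonneg[of r z] by (simp add: rho_def)

lemma rho_zero: "0 < r \<Longrightarrow> r \<le> norm z \<Longrightarrow> rho r z = 0"
  using beta_zero[of r z] by (simp add: rho_def)

lemma rho_integrable: "0 < r \<Longrightarrow> integrable lborel (rho r :: 'a::euclidean_space \<Rightarrow> real)"
  unfolding rho_def using beta_integrable[of r, where 'a='a] by simp

lemma rho_integral: "0 < r \<Longrightarrow> (LINT z|lborel. rho r (z::'a::euclidean_space)) = 1"
  unfolding rho_def using beta_integral_pos[of r, where 'a='a] by simp

lemma rho_cont: "continuous_on UNIV (rho r)"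
  using smooth_cont smooth_rho by blast



definition conv :: "('b::euclidean_space \<Rightarrow> real) \<Rightarrow> ('b \<Rightarrow> 'a::euclidean_space) \<Rightarrow> 'b \<Rightarrow> 'b \<Rightarrow> ('a \<Rightarrow> real) \<Rightarrow> 'a \<Rightarrow> real" where
  "conv \<phi> j a b g y = integral (cbox a b) (\<lambda>x. \<phi> x * g (y - j x))"

lemma Dblinfun_cont:
  assumes "smooth (g :: 'a::euclidean_space \<Rightarrow> real)"
  shows "continuous_on UNIV (\<lambda>z. Blinfun (frechet_derivative g (at z)))"
proof (rule continuous_on_blinfun_componentwise)
  fix i :: 'a
  have dg: "g differentiable_on UNIV" using smooth_diff[OF assms] .
  have "bounded_linear (frechet_derivative g (at z))" for z
    using dg by (auto simp: differentiable_on_def linear_conv_bounded_linear[symmetric] intro: linear_frechet_derivative)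
  then have eq: "(\<lambda>z. blinfun_apply (Blinfun (frechet_derivative g (at z))) i) = (\<lambda>z. frechet_derivative g (at z) i)"
    by (simp add: bounded_linear_Blinfun_apply)
  have c: "continuous_on UNIV (\<lambda>z. frechet_derivative g (at z) i)"
    using smooth_cont[OF smooth_deriv[OF assms]] .
  show "continuous_on UNIV (\<lambda>z. blinfun_apply (Blinfun (frechet_derivative g (at z))) i)" unfolding eq by (rule c)
qed

lemma conv_has_derivative:
  fixes \<phi> :: "'b::euclidean_space \<Rightarrow> real" and j :: "'b \<Rightarrow> 'a::euclidean_space"
  assumes g: "smooth g" and j: "linear j" and phi: "continuous_on UNIV \<phi>"
  shows "(conv \<phi> j a b g has_derivative (\<lambda>v. conv \<phi> j a b (\<lambda>z. frechet_derivative g (at z) v) y)) (at y)"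
proof -
  have dg: "g differentiable_on UNIV" using smooth_diff[OF g] .
  have bl: "bounded_linear (frechet_derivative g (at z))" for z
    using dg by (auto simp: differentiable_on_def linear_conv_bounded_linear[symmetric] intro: linear_frechet_derivative)
  have gd: "(g has_derivative frechet_derivative g (at z)) (at z)" for z
    using dg by (auto simp: differentiable_on_def frechet_derivative_works[symmetric])
  have jc: "continuous_on UNIV j" using j by (simp add: linear_continuous_on linear_conv_bounded_linear)
  define fx where "fx = (\<lambda>y x. \<phi> x *\<^sub>R Blinfun (frechet_derivative g (at (y - j x))))"
  have fxa: "blinfun_apply (fx y x) = (\<lambda>v. \<phi> x * frechet_derivative g (at (y - j x)) v)" for y x
    by (simp add: fx_def scaleR_blinfun.rep_eq bounded_linear_Blinfun_apply[OF bl])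
  have cont_fx: "continuous_on (UNIV \<times> cbox a b) (\<lambda>(y, x). fx y x)"
  proof -
    have c1: "continuous_on (UNIV \<times> cbox a b) (\<lambda>p. \<phi> (snd p))"
      by (rule continuous_on_compose2[OF phi]) (auto intro: continuous_intros)
    have c2: "continuous_on (UNIV \<times> cbox a b) (\<lambda>p. fst p - j (snd p))"
      by (intro continuous_intros continuous_on_compose2[OF jc]) auto
    have c3: "continuous_on (UNIV \<times> cbox a b) (\<lambda>p. Blinfun (frechet_derivative g (at (fst p - j (snd p)))))"
      by (rule continuous_on_compose2[OF Dblinfun_cont[OF g] c2]) auto
    show ?thesis using continuous_on_scaleR[OF c1 c3] by (simp add: fx_def case_prod_unfold)
  qed
  have "((\<lambda>y. integral (cbox a b) (\<lambda>x. \<phi> x * g (y - j x))) has_derivative integral (cbox a b) (fx y)) (at y within UNIV)"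
  proof (rule leibniz_rule[where fx=fx])
    fix y x
    have "((\<lambda>y. y - j x) has_derivative (\<lambda>v. v)) (at y)"
      by (auto intro!: derivative_eq_intros)
    from diff_chain_at[OF this gd] have "((\<lambda>y. g (y - j x)) has_derivative frechet_derivative g (at (y - j x))) (at y)"
      by (simp add: o_def)
    then have "((\<lambda>y. \<phi> x * g (y - j x)) has_derivative (\<lambda>v. \<phi> x * frechet_derivative g (at (y - j x)) v)) (at y)"
      by (rule has_derivative_mult_right)
    then show "((\<lambda>y. \<phi> x * g (y - j x)) has_derivative blinfun_apply (fx y x)) (at y within UNIV)"
      by (simp add: fxa)
  next
    fix y
    show "(\<lambda>x. \<phi> x * g (y - j x)) integrable_on cbox a b"
    proof (rule integrable_continuous)
      have "continuous_on UNIV (\<lambda>x. \<phi> x * g (y - j x))"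
        by (intro continuous_intros phi continuous_on_compose2[OF smooth_cont[OF g]] continuous_on_compose2[OF jc]) auto
      then show "continuous_on (cbox a b) (\<lambda>x. \<phi> x * g (y - j x))" by (rule continuous_on_subset) auto
    qed
  qed (use cont_fx in auto)
  moreover have "blinfun_apply (integral (cbox a b) (fx y)) = (\<lambda>v. conv \<phi> j a b (\<lambda>z. frechet_derivative g (at z) v) y)"
  proof (rule ext)
    fix v
    have "continuous_on (cbox a b) (\<lambda>x. (\<lambda>(y, x). fx y x) (y, x))"
      by (rule continuous_on_compose2[OF cont_fx]) (auto intro!: continuous_intros)
    then have "continuous_on (cbox a b) (fx y)" by simp
    then have "fx y integrable_on cbox a b" by (rule integrable_continuous)
    then show "blinfun_apply (integral (cbox a b) (fx y)) v = conv \<phi> j a b (\<lambda>z. frechet_derivative g (at z) v) y"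
      by (simp add: blinfun_apply_integral fxa conv_def)
  qed
  ultimately show ?thesis unfolding conv_def[abs_def] by simp
qed

lemma smooth_conv:
  fixes \<phi> :: "'b::euclidean_space \<Rightarrow> real" and j :: "'b \<Rightarrow> 'a::euclidean_space"
  assumes g: "smooth g" and j: "linear j" and phi: "continuous_on UNIV \<phi>"
  shows "smooth (conv \<phi> j a b g)"
proof (rule smooth_coinduct[where P="\<lambda>f. \<exists>g. smooth g \<and> f = conv \<phi> j a b g"])
  fix f assume "\<exists>g. smooth g \<and> f = conv \<phi> j a b g"
  then obtain g where g: "smooth g" and f: "f = conv \<phi> j a b g" by blast
  note d = conv_has_derivative[OF g j phi, of a b]
  then have "frechet_derivative f (at y) v = conv \<phi> j a b (\<lambda>z. frechet_derivative g (at z) v) y" for y v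
    unfolding f by (rule fd_eq)
  then have "(\<lambda>y. frechet_derivative f (at y) v) = conv \<phi> j a b (\<lambda>z. frechet_derivative g (at z) v)" for v
    by auto
  then show "f differentiable_on UNIV \<and> (\<forall>v. \<exists>g. smooth g \<and> (\<lambda>x. frechet_derivative f (at x) v) = conv \<phi> j a b g)"
    using d g smooth_deriv[OF g] unfolding f by (auto simp: differentiable_on_def differentiable_def)
qed (use g in auto)



lemma tsupport_nz: "f x \<noteq> 0 \<Longrightarrow> x \<in> tsupport f"
  unfolding tsupport_def by (rule subsetD[OF closure_subset]) simp

lemma conv_nonzero:
  assumes "conv \<phi> j a b g y \<noteq> 0" shows "\<exists>x\<in>cbox a b. \<phi> x \<noteq> 0 \<and> g (y - j x) \<noteq> 0"
proof -
  have "\<not> (\<forall>x\<in>cbox a b. \<phi> x * g (y - j x) = 0)"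
  proof
    assume A: "\<forall>x\<in>cbox a b. \<phi> x * g (y - j x) = 0"
    have "conv \<phi> j a b g y = integral (cbox a b) (\<lambda>x. 0::real)"
      unfolding conv_def by (rule integral_cong) (use A in simp)
    then show False using assms by simp
  qed
  then show ?thesis by auto
qed

lemma linear_cont: "linear (j :: 'b::euclidean_space \<Rightarrow> 'a::euclidean_space) \<Longrightarrow> continuous_on S j"
  by (rule linear_continuous_on[OF iffD1[OF linear_conv_bounded_linear]])

lemma tsupport_conv:
  fixes \<phi> :: "'b::euclidean_space \<Rightarrow> real" and j :: "'b \<Rightarrow> 'a::euclidean_space"
  assumes j: "linear j" and r: "0 < r" and K: "compact (tsupport \<phi>)"
  shows "tsupport (conv \<phi> j a b (rho r)) \<subseteq> (\<lambda>p. j (fst p) + snd p) ` (tsupport \<phi> \<times> cball 0 r)"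
    and "compact ((\<lambda>p. j (fst p) + snd p) ` (tsupport \<phi> \<times> cball (0::'a) r))"
proof -
  show c: "compact ((\<lambda>p. j (fst p) + snd p) ` (tsupport \<phi> \<times> cball (0::'a) r))"
  proof (rule compact_continuous_image)
    have "continuous_on (tsupport \<phi> \<times> cball 0 r) (\<lambda>p. j (fst p))"
      by (rule continuous_on_compose2[OF linear_cont[OF j] continuous_on_fst[OF continuous_on_id]]) auto
    then show "continuous_on (tsupport \<phi> \<times> cball 0 r) (\<lambda>p. j (fst p) + snd p)"
      by (intro continuous_on_add continuous_on_snd continuous_on_id)
    show "compact (tsupport \<phi> \<times> cball (0::'a) r)" by (intro compact_Times K compact_cball)
  qed
  show "tsupport (conv \<phi> j a b (rho r)) \<subseteq> (\<lambda>p. j (fst p) + snd p) ` (tsupport \<phi> \<times> cball 0 r)"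
    unfolding tsupport_def[of "conv \<phi> j a b (rho r)"]
  proof (rule closure_minimal)
    show "closed ((\<lambda>p. j (fst p) + snd p) ` (tsupport \<phi> \<times> cball 0 r))" using c by (rule compact_imp_closed)
    show "{x. conv \<phi> j a b (rho r) x \<noteq> 0} \<subseteq> (\<lambda>p. j (fst p) + snd p) ` (tsupport \<phi> \<times> cball 0 r)"
    proof
      fix y assume "y \<in> {x. conv \<phi> j a b (rho r) x \<noteq> 0}"
      then have "conv \<phi> j a b (rho r) y \<noteq> 0" by simp
      from conv_nonzero[OF this] obtain x where x: "\<phi> x \<noteq> 0" "rho r (y - j x) \<noteq> 0" by blast
      have "\<not> r \<le> norm (y - j x)" using rho_zero[OF r, of "y - j x"] x(2) by blast
      then have "norm (y - j x) < r" by simp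
      then have m: "(x, y - j x) \<in> tsupport \<phi> \<times> cball 0 r" using tsupport_nz[of \<phi> x] x(1) by (auto simp: dist_norm norm_minus_commute)
      have e: "y = j (fst (x, y - j x)) + snd (x, y - j x)" by simp
      show "y \<in> (\<lambda>p. j (fst p) + snd p) ` (tsupport \<phi> \<times> cball 0 r)" by (rule image_eqI[where f="\<lambda>p. j (fst p) + snd p" and x="(x, y - j x)", OF e m])
    qed
  qed
qed



lemma norm_iexp_minus1: "cmod (exp (\<i> * complex_of_real t) - 1) \<le> \<bar>t\<bar>"
proof -
  have e: "exp (\<i> * complex_of_real t) = Complex (cos t) (sin t)"
    using cis_conv_exp[of t] by (simp add: cis.ctr)
  have "(cmod (exp (\<i> * complex_of_real t) - 1))^2 = (cos t - 1)^2 + (sin t)^2"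
    unfolding e by (simp add: cmod_def)
  also have "\<dots> = 2 - 2 * cos t" using sin_cos_squared_add[of t] by (simp add: power2_eq_square algebra_simps)
  also have "\<dots> = 4 * (sin (t/2))^2" using cos_double_sin[of "t/2"] by simp
  also have "\<dots> \<le> 4 * (t/2)^2"
  proof -
    have "\<bar>sin (t/2)\<bar> \<le> \<bar>t/2\<bar>" by (rule abs_sin_x_le_abs_x)
    then have "(sin (t/2))^2 \<le> (t/2)^2" by (metis abs_le_square_iff)
    then show ?thesis by simp
  qed
  also have "\<dots> = \<bar>t\<bar>^2" by (simp add: power2_eq_square)
  finally show ?thesis by (rule power2_le_imp_le) simp
qed

lemma fourier_conv:
  fixes \<phi> :: "'b::euclidean_space \<Rightarrow> real" and j :: "'b \<Rightarrow> 'a::euclidean_space"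
  assumes j: "linear j" and r: "0 < r" and phic: "continuous_on UNIV \<phi>" and K: "compact (tsupport \<phi>)"
    and ab: "tsupport \<phi> \<subseteq> cbox a b"
  shows "fourier (\<lambda>y. cnj (complex_of_real (conv \<phi> j a b (rho r) y))) \<xi> =
         fourier (\<lambda>x. cnj (complex_of_real (\<phi> x))) (adjoint j \<xi>) *
         (LINT z|lborel. exp (\<i> * complex_of_real (\<xi> \<bullet> z)) * complex_of_real (rho r z))"
proof -
  define \<rho> where "\<rho> = (rho r :: 'a \<Rightarrow> real)"
  define T where "T = tsupport \<phi>"
  define S2 where "S2 = (\<lambda>p. j (fst p) + snd p) ` (T \<times> cball (0::'a) r)"
  define R where "R = (LINT z|lborel. exp (\<i> * complex_of_real (\<xi> \<bullet> z)) * complex_of_real (\<rho> z))"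
  have S2c: "compact S2" using tsupport_conv(2)[OF j r K] by (simp add: S2_def T_def)
  have Tc: "compact T" using K by (simp add: T_def)
  have jc: "continuous_on UNIV j" by (rule linear_cont[OF j])
  have rc: "continuous_on UNIV \<rho>" using rho_cont by (simp add: \<rho>_def)
  have phi0: "\<phi> x = 0" if "x \<notin> T" for x using tsupport_nz[of \<phi> x] that by (auto simp: T_def)
  have rho0: "\<rho> z = 0" if "r \<le> norm z" for z using rho_zero[OF r that] by (simp add: \<rho>_def)
  have conv_eq: "conv \<phi> j a b \<rho> y = (LINT x|lborel. \<phi> x * \<rho> (y - j x))" for y
  proof -
    let ?f = "\<lambda>x. \<phi> x * \<rho> (y - j x)"
    have cf: "continuous_on UNIV ?f"
      by (intro continuous_intros continuous_on_compose2[OF rc] continuous_on_compose2[OF jc] phic) auto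
    have si: "set_integrable lborel (cbox a b) ?f" unfolding set_integrable_def
      by (rule borel_integrable_compact) (auto intro: continuous_on_subset[OF cf])
    have "(LINT x:cbox a b|lborel. ?f x) = integral (cbox a b) ?f" by (rule set_borel_integral_eq_integral(2)[OF si])
    moreover have "(LINT x:cbox a b|lborel. ?f x) = (LINT x|lborel. ?f x)"
      unfolding set_lebesgue_integral_def
    proof (rule Bochner_Integration.integral_cong)
      fix x
      show "indicator (cbox a b) x *\<^sub>R ?f x = ?f x"
      proof (cases "x \<in> cbox a b")
        case False
        then have "x \<notin> T" using ab by (auto simp: T_def)
        then show ?thesis using phi0 by simp
      qed simp
    qed simp
    ultimately show ?thesis by (simp add: conv_def)
  qed
  define F where "F = (\<lambda>x y. exp (\<i> * complex_of_real (\<xi> \<bullet> y)) * complex_of_real (\<phi> x * \<rho> (y - j x)))"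
  have Fint: "integrable (lborel \<Otimes>\<^sub>M lborel) (case_prod F)"
  proof -
    have cF: "continuous_on UNIV (\<lambda>p. F (fst p) (snd p))"
      unfolding F_def
      by (intro continuous_intros continuous_on_compose2[OF rc] continuous_on_compose2[OF jc]
            continuous_on_compose2[OF phic]) auto
    have "integrable lborel (\<lambda>p::'b\<times>'a. indicator (T \<times> S2) p *\<^sub>R (\<lambda>p. F (fst p) (snd p)) p)"
      by (rule borel_integrable_compact) (auto intro: compact_Times Tc S2c continuous_on_subset[OF cF])
    moreover have "(\<lambda>p. indicator (T \<times> S2) p *\<^sub>R (\<lambda>p. F (fst p) (snd p)) p) = case_prod F"
    proof
      fix p :: "'b \<times> 'a"
      obtain x y where p: "p = (x, y)" by (cases p)
      show "indicator (T \<times> S2) p *\<^sub>R (\<lambda>p. F (fst p) (snd p)) p = case_prod F p"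
      proof (cases "F x y = 0")
        case False
        then have "\<phi> x \<noteq> 0" "\<rho> (y - j x) \<noteq> 0" by (auto simp: F_def)
        then have xT: "x \<in> T" and "\<not> r \<le> norm (y - j x)" using phi0 rho0 by metis+
        then have "(x, y - j x) \<in> T \<times> cball 0 r" by (auto simp: dist_norm norm_minus_commute)
        then have "y \<in> S2" unfolding S2_def
          by (rule image_eqI[where f="\<lambda>p. j (fst p) + snd p" and x="(x, y - j x)", rotated]) simp
        then show ?thesis using xT by (simp add: p indicator_def)
      qed (simp add: p)
    qed
    ultimately show ?thesis by (simp add: lborel_prod)
  qed
  have step1: "fourier (\<lambda>y. cnj (complex_of_real (conv \<phi> j a b \<rho> y))) \<xi> = (LINT y|lborel. LINT x|lborel. F x y)"
    unfolding fourier_def F_def conv_eq by (simp del: of_real_mult)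
  have step2: "(LINT y|lborel. LINT x|lborel. F x y) = (LINT x|lborel. LINT y|lborel. F x y)"
    by (rule lborel_pair.Fubini_integral[OF Fint])
  have step3: "(LINT y|lborel. F x y) = (exp (\<i> * complex_of_real (adjoint j \<xi> \<bullet> x)) * complex_of_real (\<phi> x)) * R" for x
  proof -
    have cFx: "continuous_on UNIV (F x)"
      unfolding F_def
      by (intro continuous_intros continuous_on_compose2[OF rc] continuous_on_compose2[OF jc]) auto
    have "(LINT y|lborel. F x y) = integral\<^sup>L (distr lborel borel ((+) (j x))) (F x)"
      by (simp add: lborel_distr_plus)
    also have "\<dots> = (LINT z|lborel. F x (j x + z))"
      by (rule integral_distr) (auto intro: borel_measurable_continuous_onI[OF cFx])
    also have "\<dots> = (LINT z|lborel. (exp (\<i> * complex_of_real (adjoint j \<xi> \<bullet> x)) * complex_of_real (\<phi> x)) *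
                        (exp (\<i> * complex_of_real (\<xi> \<bullet> z)) * complex_of_real (\<rho> z)))"
    proof (rule Bochner_Integration.integral_cong)
      fix z
      have "\<xi> \<bullet> (j x + z) = adjoint j \<xi> \<bullet> x + \<xi> \<bullet> z"
        using adjoint_works[OF j, of x \<xi>] by (simp add: inner_add_right inner_commute)
      then show "F x (j x + z) = (exp (\<i> * complex_of_real (adjoint j \<xi> \<bullet> x)) * complex_of_real (\<phi> x)) *
                        (exp (\<i> * complex_of_real (\<xi> \<bullet> z)) * complex_of_real (\<rho> z))"
        by (simp add: F_def distrib_left exp_add)
    qed simp
    also have "\<dots> = (exp (\<i> * complex_of_real (adjoint j \<xi> \<bullet> x)) * complex_of_real (\<phi> x)) * R"
      unfolding R_def by (rule integral_mult_right_zero)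
    finally show ?thesis .
  qed
  have "fourier (\<lambda>y. cnj (complex_of_real (conv \<phi> j a b \<rho> y))) \<xi> =
     (LINT x|lborel. (exp (\<i> * complex_of_real (adjoint j \<xi> \<bullet> x)) * complex_of_real (\<phi> x)) * R)"
    using step1 step2 step3 by simp
  also have "\<dots> = fourier (\<lambda>x. cnj (complex_of_real (\<phi> x))) (adjoint j \<xi>) * R"
    unfolding fourier_def by simp
  finally show ?thesis by (simp add: R_def \<rho>_def)
qed



lemma fourier_meas:
  fixes f :: "'a::euclidean_space \<Rightarrow> complex"
  assumes f[measurable]: "f \<in> borel_measurable borel"
  shows "fourier f \<in> borel_measurable borel"
proof -
  have "(\<lambda>\<xi>. LINT x|lborel. exp (\<i> * complex_of_real (\<xi> \<bullet> x)) * f x) \<in> borel_measurable borel"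
    by (rule lborel.borel_measurable_lebesgue_integral) measurable
  then show ?thesis unfolding fourier_def[abs_def] .
qed

definition RR :: "real \<Rightarrow> 'a::euclidean_space \<Rightarrow> complex" where
  "RR r \<xi> = (LINT z|lborel. exp (\<i> * complex_of_real (\<xi> \<bullet> z)) * complex_of_real (rho r z))"

lemma RR_le1: "0 < r \<Longrightarrow> cmod (RR r \<xi>) \<le> 1"
proof -
  assume r: "0 < r"
  have "cmod (RR r \<xi>) \<le> (LINT z|lborel. cmod (exp (\<i> * complex_of_real (\<xi> \<bullet> z)) * complex_of_real (rho r z)))"
    unfolding RR_def by (rule integral_norm_bound)
  also have "\<dots> = (LINT z|lborel. rho r (z::'a))"
    by (simp add: norm_mult rho_nonneg[OF r])
  also have "\<dots> = 1" using rho_integral[OF r] .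
  finally show ?thesis .
qed

lemma RR_close: "0 < r \<Longrightarrow> cmod (RR r \<xi> - 1) \<le> norm \<xi> * r"
proof -
  assume r: "0 < r"
  have ri: "integrable lborel (rho r :: 'a \<Rightarrow> real)" using rho_integrable[OF r] .
  have rm[measurable]: "rho r \<in> borel_measurable (borel :: 'a measure)"
    using rho_cont by (rule borel_measurable_continuous_onI)
  have i1: "integrable lborel (\<lambda>z::'a. exp (\<i> * complex_of_real (\<xi> \<bullet> z)) * complex_of_real (rho r z))"
  proof (rule Bochner_Integration.integrable_bound[OF ri])
    show "(\<lambda>z::'a. exp (\<i> * complex_of_real (\<xi> \<bullet> z)) * complex_of_real (rho r z)) \<in> borel_measurable lborel"
      by measurable
  qed (auto simp: norm_mult)
  have i2: "integrable lborel (\<lambda>z::'a. complex_of_real (rho r z))"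
    using ri by simp
  have "RR r \<xi> - 1 = (LINT z|lborel. exp (\<i> * complex_of_real (\<xi> \<bullet> z)) * complex_of_real (rho r (z::'a))) -
        (LINT z|lborel. complex_of_real (rho r (z::'a)))"
    using rho_integral[OF r, where 'a='a] by (simp add: RR_def)
  also have "\<dots> = (LINT z|lborel. (exp (\<i> * complex_of_real (\<xi> \<bullet> z)) - 1) * complex_of_real (rho r (z::'a)))"
    using i1 i2 by (simp add: Bochner_Integration.integral_diff[symmetric] algebra_simps)
  finally have eq: "RR r \<xi> - 1 = (LINT z|lborel. (exp (\<i> * complex_of_real (\<xi> \<bullet> z)) - 1) * complex_of_real (rho r (z::'a)))" .
  have i3: "integrable lborel (\<lambda>z::'a. (exp (\<i> * complex_of_real (\<xi> \<bullet> z)) - 1) * complex_of_real (rho r z))"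
    using Bochner_Integration.integrable_diff[OF i1 i2] by (simp add: algebra_simps)
  have "cmod (RR r \<xi> - 1) \<le> (LINT z|lborel. cmod ((exp (\<i> * complex_of_real (\<xi> \<bullet> z)) - 1) * complex_of_real (rho r z)))"
    unfolding eq by (rule integral_norm_bound)
  also have "\<dots> \<le> (LINT z|lborel. (norm \<xi> * r) * rho r (z::'a))"
  proof (rule integral_mono)
    show "integrable lborel (\<lambda>z::'a. cmod ((exp (\<i> * complex_of_real (\<xi> \<bullet> z)) - 1) * complex_of_real (rho r z)))"
      using i3 by (rule integrable_norm)
    show "integrable lborel (\<lambda>z::'a. (norm \<xi> * r) * rho r z)" using ri by simp
    fix z :: 'a
    show "cmod ((exp (\<i> * complex_of_real (\<xi> \<bullet> z)) - 1) * complex_of_real (rho r z)) \<le> (norm \<xi> * r) * rho r z"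
    proof (cases "r \<le> norm z")
      case True then show ?thesis using rho_zero[OF r True] by simp
    next
      case False
      have "cmod (exp (\<i> * complex_of_real (\<xi> \<bullet> z)) - 1) \<le> \<bar>\<xi> \<bullet> z\<bar>" by (rule norm_iexp_minus1)
      also have "\<dots> \<le> norm \<xi> * norm z" by (rule Cauchy_Schwarz_ineq2)
      also have "\<dots> \<le> norm \<xi> * r" using False by (intro mult_left_mono) auto
      finally have "cmod (exp (\<i> * complex_of_real (\<xi> \<bullet> z)) - 1) \<le> norm \<xi> * r" .
      then show ?thesis using rho_nonneg[OF r, of z]
        by (simp add: norm_mult mult_right_mono)
    qed
  qed
  also have "\<dots> = norm \<xi> * r" using rho_integral[OF r, where 'a='a] by simp
  finally show ?thesis .
qed

lemma RR_lim: "0 < e \<Longrightarrow> (\<lambda>n. RR (e / real (Suc n)) \<xi>) \<longlonglongrightarrow> 1"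
proof -
  assume e: "0 < e"
  have "(\<lambda>n. norm \<xi> * (e * inverse (real (Suc n)))) \<longlonglongrightarrow> norm \<xi> * (e * 0)"
    by (intro tendsto_mult tendsto_const LIMSEQ_inverse_real_of_nat)
  then have g: "(\<lambda>n. norm \<xi> * (e / real (Suc n))) \<longlonglongrightarrow> 0" by (simp add: divide_inverse)
  have "(\<lambda>n. RR (e / real (Suc n)) \<xi> - 1) \<longlonglongrightarrow> 0"
  proof (rule Lim_null_comparison[OF _ g])
    show "\<forall>\<^sub>F n in sequentially. norm (RR (e / real (Suc n)) \<xi> - 1) \<le> norm \<xi> * (e / real (Suc n))"
      using e by (intro always_eventually allI RR_close) simp
  qed
  then show ?thesis by (rule LIM_zero_cancel)
qed

lemma RR_fourier: "RR r = fourier (\<lambda>z. complex_of_real (rho r z))"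
  by (rule ext) (simp add: RR_def fourier_def)

lemma RR_meas: "RR r \<in> borel_measurable (borel :: 'a::euclidean_space measure)"
proof -
  have "rho r \<in> borel_measurable (borel :: 'a measure)"
    using rho_cont by (rule borel_measurable_continuous_onI)
  then have "(\<lambda>z::'a. complex_of_real (rho r z)) \<in> borel_measurable borel" by measurable
  then show ?thesis unfolding RR_fourier by (rule fourier_meas)
qed



lemma vanish_sub:
  fixes \<mu> :: "'a::euclidean_space measure" and j :: "'b::euclidean_space \<Rightarrow> 'a"
  assumes j: "linear j" and sets\<mu>: "sets \<mu> = sets borel"
    and e: "0 < e"
    and van: "\<And>\<psi>. test_function \<psi> \<Longrightarrow> tsupport \<psi> \<subseteq> ball w (2 * e) \<Longrightarrow> Im_tilde \<mu> \<psi> = 0"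
    and tf: "test_function \<phi>" and sV: "tsupport \<phi> \<subseteq> j -` ball w e"
  shows "Im_tilde (distr \<mu> borel (adjoint j)) \<phi> = 0"
proof -
  have sm: "smooth \<phi>" and K: "compact (tsupport \<phi>)" using tf by (auto simp: test_function_def)
  have phic: "continuous_on UNIV \<phi>" using smooth_cont[OF sm] .
  obtain a where ab: "tsupport \<phi> \<subseteq> cbox (-a) a"
    using bounded_subset_cbox_symmetric[OF compact_imp_bounded[OF K]] by blast
  define G where "G = (\<lambda>\<xi>. fourier (\<lambda>x. cnj (complex_of_real (\<phi> x))) (adjoint j \<xi>))"
  have adjm: "adjoint j \<in> borel_measurable (borel :: 'a measure)"
    by (rule borel_measurable_continuous_onI[OF linear_cont[OF adjoint_linear[OF j]]])
  have adjm\<mu>: "adjoint j \<in> measurable \<mu> borel"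
    using adjm by (simp add: measurable_cong_sets[OF sets\<mu> refl])
  have phim[measurable]: "\<phi> \<in> borel_measurable borel" using phic by (rule borel_measurable_continuous_onI)
  have fm: "fourier (\<lambda>x. cnj (complex_of_real (\<phi> x))) \<in> borel_measurable borel"
    by (rule fourier_meas) (unfold complex_cnj_complex_of_real, measurable)
  have Gm: "G \<in> borel_measurable \<mu>"
    unfolding G_def using measurable_compose[OF adjm\<mu> fm] by (simp add: o_def)
  have A: "Im_tilde (distr \<mu> borel (adjoint j)) \<phi> = Im (LINT \<xi>|\<mu>. G \<xi>)"
    unfolding Im_tilde_def meas_tilde_def G_def
    by (subst integral_distr[OF adjm\<mu> fm]) simp
  show ?thesis
  proof (cases "integrable \<mu> G")
    case False
    then show ?thesis unfolding A by (simp add: not_integrable_integral_eq)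
  next
    case True
    define r where "r = (\<lambda>n::nat. e / real (Suc n))"
    have rpos: "0 < r n" for n using e by (simp add: r_def)
    have rle: "r n \<le> e" for n using e by (simp add: r_def field_simps)
    define s where "s = (\<lambda>n \<xi>. G \<xi> * RR (r n) \<xi>)"
    have sm: "s n \<in> borel_measurable \<mu>" for n
    proof -
      have "RR (r n) \<in> borel_measurable \<mu>"
        using RR_meas by (simp add: measurable_cong_sets[OF sets\<mu> refl])
      then show ?thesis unfolding s_def using Gm by measurable
    qed
    have lim: "(\<lambda>n. integral\<^sup>L \<mu> (s n)) \<longlonglongrightarrow> integral\<^sup>L \<mu> G"
    proof (rule integral_dominated_convergence[where w="\<lambda>\<xi>. norm (G \<xi>)"])
      show "G \<in> borel_measurable \<mu>" by (rule Gm)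
      show "s n \<in> borel_measurable \<mu>" for n by (rule sm)
      show "integrable \<mu> (\<lambda>\<xi>. norm (G \<xi>))" using True by (rule integrable_norm)
      show "AE \<xi> in \<mu>. (\<lambda>n. s n \<xi>) \<longlonglongrightarrow> G \<xi>"
      proof (rule AE_I2)
        fix \<xi>
        have "(\<lambda>n. G \<xi> * RR (r n) \<xi>) \<longlonglongrightarrow> G \<xi> * 1"
          unfolding r_def by (intro tendsto_mult tendsto_const RR_lim e)
        then show "(\<lambda>n. s n \<xi>) \<longlonglongrightarrow> G \<xi>" by (simp add: s_def)
      qed
      show "AE \<xi> in \<mu>. norm (s n \<xi>) \<le> norm (G \<xi>)" for n
      proof (rule AE_I2)
        fix \<xi>
        have "norm (s n \<xi>) = norm (G \<xi>) * norm (RR (r n) \<xi>)" by (simp add: s_def norm_mult)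
        also have "\<dots> \<le> norm (G \<xi>) * 1" by (intro mult_left_mono RR_le1 rpos) simp
        finally show "norm (s n \<xi>) \<le> norm (G \<xi>)" by simp
      qed
    qed
    have zero: "Im (integral\<^sup>L \<mu> (s n)) = 0" for n
    proof -
      define \<psi> where "\<psi> = conv \<phi> j (-a) a (rho (r n))"
      define S2 where "S2 = (\<lambda>p. j (fst p) + snd p) ` (tsupport \<phi> \<times> cball (0::'a) (r n))"
      have S2c: "compact S2" unfolding S2_def by (rule tsupport_conv(2)[OF j rpos K])
      have supp: "tsupport \<psi> \<subseteq> S2" unfolding S2_def \<psi>_def by (rule tsupport_conv(1)[OF j rpos K])
      have "smooth \<psi>" unfolding \<psi>_def by (rule smooth_conv[OF smooth_rho j phic])
      moreover have "compact (tsupport \<psi>)"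
      proof -
        have "compact (S2 \<inter> tsupport \<psi>)" using S2c by (rule compact_Int_closed) (simp add: tsupport_def)
        moreover have "S2 \<inter> tsupport \<psi> = tsupport \<psi>" using supp by blast
        ultimately show ?thesis by simp
      qed
      ultimately have tf\<psi>: "test_function \<psi>" by (simp add: test_function_def)
      have "S2 \<subseteq> ball w (2 * e)"
      proof
        fix q assume "q \<in> S2"
        then obtain x z where q: "q = j x + z" and x: "x \<in> tsupport \<phi>" and z: "norm z \<le> r n"
          unfolding S2_def by (auto simp: dist_norm)
        have "dist w (j x) < e" using sV x by auto
        moreover have "dist (j x) q \<le> e" using z rle[of n] by (simp add: q dist_norm)
        ultimately have "dist w q < 2 * e" using dist_triangle[of w q "j x"] by linarith
        then show "q \<in> ball w (2 * e)" by simp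
      qed
      with supp have "tsupport \<psi> \<subseteq> ball w (2 * e)" by (rule order_trans)
      with tf\<psi> have "Im_tilde \<mu> \<psi> = 0" by (rule van)
      moreover have "meas_tilde \<mu> (\<lambda>x. complex_of_real (\<psi> x)) = integral\<^sup>L \<mu> (s n)"
      proof -
        have fc: "fourier (\<lambda>x. cnj (complex_of_real (\<psi> x))) = (\<lambda>\<xi>. G \<xi> * RR (r n) \<xi>)"
          unfolding \<psi>_def G_def RR_def by (rule ext) (rule fourier_conv[OF j rpos phic K ab])
        show ?thesis unfolding meas_tilde_def s_def fc ..
      qed
      ultimately show ?thesis by (simp add: Im_tilde_def)
    qed
    have "(\<lambda>n. Im (integral\<^sup>L \<mu> (s n))) \<longlonglongrightarrow> Im (integral\<^sup>L \<mu> G)"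
      by (rule tendsto_Im[OF lim])
    then have "(\<lambda>n. 0) \<longlonglongrightarrow> Im (integral\<^sup>L \<mu> G)" by (simp add: zero)
    then have "Im (integral\<^sup>L \<mu> G) = 0" by (rule LIMSEQ_unique[OF _ tendsto_const])
    then show ?thesis unfolding A .
  qed
qed

theorem lemma6p9:
  fixes \<mu> :: "'a::euclidean_space measure"
    and j :: "'b::euclidean_space \<Rightarrow> 'a"
  assumes "linear j" and "inj j"
    and "tempered_measure \<mu>"
    and "tempered_measure (distr \<mu> borel (adjoint j))"
  shows "j ` dist_support (Im_tilde (distr \<mu> borel (adjoint j)))
           \<subseteq> dist_support (Im_tilde \<mu>)"
proof
  have j: "linear j" by fact
  have sets\<mu>: "sets \<mu> = sets borel" using assms(3) by (simp add: tempered_measure_def)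
  fix w assume "w \<in> j ` dist_support (Im_tilde (distr \<mu> borel (adjoint j)))"
  then obtain y where y: "y \<in> dist_support (Im_tilde (distr \<mu> borel (adjoint j)))" and w: "w = j y"
    by blast
  show "w \<in> dist_support (Im_tilde \<mu>)"
  proof (rule ccontr)
    assume "w \<notin> dist_support (Im_tilde \<mu>)"
    then obtain U where U: "open U" "w \<in> U"
      and van: "\<And>\<psi>. test_function \<psi> \<and> tsupport \<psi> \<subseteq> U \<longrightarrow> Im_tilde \<mu> \<psi> = 0"
      unfolding dist_support_def by auto
    obtain d where d: "0 < d" "ball w d \<subseteq> U" using U open_contains_ball by blast
    define e where "e = d / 2"
    have e: "0 < e" using d by (simp add: e_def)
    have van': "Im_tilde \<mu> \<psi> = 0" if "test_function \<psi>" "tsupport \<psi> \<subseteq> ball w (2 * e)" for \<psi>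
      using van[of \<psi>] that d by (auto simp: e_def)
    define V where "V = j -` ball w e"
    have "open V" unfolding V_def
      by (rule continuous_open_vimage) (auto intro: linear_continuous_at[OF iffD1[OF linear_conv_bounded_linear j]])
    moreover have "y \<in> V" using e by (simp add: V_def w)
    moreover have "\<forall>\<phi>. test_function \<phi> \<and> tsupport \<phi> \<subseteq> V \<longrightarrow> Im_tilde (distr \<mu> borel (adjoint j)) \<phi> = 0"
      using vanish_sub[OF j sets\<mu> e van'] by (auto simp: V_def)
    ultimately have "y \<in> \<Union>{U. open U \<and> (\<forall>\<phi>. test_function \<phi> \<and> tsupport \<phi> \<subseteq> U \<longrightarrow> Im_tilde (distr \<mu> borel (adjoint j)) \<phi> = 0)}"
      by blast
    then show False using y unfolding dist_support_def by blast
  qed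
qed

end
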